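(* Let $\mathcal{F}_c^=$ and $\mathcal{S}_c^=$ be as defined in the context. Then $\operatorname{conv}(\mathcal{F}_c^=)=\operatorname{proj}_{(z,\mathbf{x})}\operatorname{conv}(\mathcal{S}_c^=)$.
   Context: Let $m\ge1$, $M=\{1,\dots,m\}$, $p\in\{1,\dots,m\}$, and $h_1\ge h_2\ge\dots\ge h_m\ge0$. The mixing set with a cardinality constraint is $\mathcal{F}_c^==\{(z,\mathbf{x})\in\mathbb{R}_+\times\{0,1\}^m : x_i=0\Rightarrow z\ge h_i\ \forall i\in M,\ \mathbf{1}^\top\mathbf{x}\le p\}$. Let $\Xi_c^==\{(z,\mathbf{x})\in\mathbb{R}_+\times\mathbb{R}^m_+ : \mathbf{x}\le\mathbf{1},\ \mathbf{1}^\top\mathbf{x}\le p\}$ and $\Delta_m=\{\mathbf{y}\in\mathbb{Z}^m_+:\mathbf{1}^\top\mathbf{y}\le1\}$. The set $\mathcal{S}_c^=$ is the set of $(z,\mathbf{x};\mathbf{y})\in\Xi_c^=\times\Delta_m$ satisfying: $(1-x_i)(1-\mathbf{1}^\top\mathbf{y})\ge0$ and $-(1-x_i)(1-\mathbf{1}^\top\mathbf{y})\ge0$ for all $i\in M$; $zy_i-h_iy_i\ge0$ for all $i\in M$; $-x_iy_i\ge0$ for all $i\in M$; $-(1-x_i)y_j\ge0$ for all $i,j\in M$ with $i<j$. *)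

theory Defs
  imports "HOL-Analysis.Analysis"
begin

text \<open>The index set M = {1,...,m} is modelled by a finite linearly ordered type 'n
  (m = CARD('n)); points (z,x) live in real \<times> (real, 'n) vec, points (z,x;y) in
  real \<times> (real, 'n) vec \<times> (real, 'n) vec.\<close>

definition mixF :: "('n::{finite,linorder} \<Rightarrow> real) \<Rightarrow> nat \<Rightarrow> (real \<times> (real, 'n) vec) set" where
  "mixF h p = {(z, x). z \<ge> 0 \<and> (\<forall>i. x $ i \<in> {0, 1})
      \<and> (\<forall>i. x $ i = 0 \<longrightarrow> z \<ge> h i) \<and> (\<Sum>i\<in>UNIV. x $ i) \<le> real p}"

definition Xi :: "nat \<Rightarrow> (real \<times> (real, 'n::finite) vec) set" where
  "Xi p = {(z, x). z \<ge> 0 \<and> (\<forall>i. 0 \<le> x $ i \<and> x $ i \<le> 1) \<and> (\<Sum>i\<in>UNIV. x $ i) \<le> real p}"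

definition Delta :: "((real, 'n::finite) vec) set" where
  "Delta = {y. (\<forall>i. y $ i \<in> \<int> \<and> y $ i \<ge> 0) \<and> (\<Sum>i\<in>UNIV. y $ i) \<le> 1}"

definition mixS :: "('n::{finite,linorder} \<Rightarrow> real) \<Rightarrow> nat \<Rightarrow> (real \<times> (real, 'n) vec \<times> (real, 'n) vec) set" where
  "mixS h p = {(z, x, y). (z, x) \<in> Xi p \<and> y \<in> Delta
      \<and> (\<forall>i. (1 - x $ i) * (1 - (\<Sum>j\<in>UNIV. y $ j)) \<ge> 0)
      \<and> (\<forall>i. - ((1 - x $ i) * (1 - (\<Sum>j\<in>UNIV. y $ j))) \<ge> 0)
      \<and> (\<forall>i. z * y $ i - h i * y $ i \<ge> 0)
      \<and> (\<forall>i. - (x $ i * y $ i) \<ge> 0)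
      \<and> (\<forall>i j. i < j \<longrightarrow> - ((1 - x $ i) * y $ j) \<ge> 0)}"

end

theory Submission
  imports Defs
begin

lemma key:
  fixes x :: "real^'n" and Os :: "'n set" and p :: nat
  assumes "\<forall>i. 0 \<le> x$i \<and> x$i \<le> 1" "(\<Sum>i\<in>UNIV. x$i) \<le> real p" "\<forall>i\<in>Os. x$i = 1"
  shows "x \<in> convex hull {u. (\<forall>i. u$i \<in> {0,1}) \<and> (\<Sum>i\<in>UNIV. u$i) \<le> real p \<and> (\<forall>i\<in>Os. u$i = 1)}"
  using assms
proof (induction "card {i. 0 < x$i \<and> x$i < 1}" arbitrary: x rule: less_induct)
  case less
  define T where "T = {u. (\<forall>i. u$i \<in> {0,1}) \<and> (\<Sum>i\<in>UNIV. u$i) \<le> real p \<and> (\<forall>i\<in>Os. u$i = 1)}"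
  define F where "F = {i. 0 < x$i \<and> x$i < 1}"
  have cvx: "convex (convex hull T)" by simp
  show ?case
  proof (cases "F = {}")
    case True
    have "\<forall>i. x$i \<in> {0,1}"
    proof
      fix i
      have "\<not> (0 < x$i \<and> x$i < 1)" using True unfolding F_def by blast
      then show "x$i \<in> {0,1}" using less.prems(1)[rule_format, of i] by (cases "x$i = 0") auto
    qed
    then have "x \<in> T" using less.prems(2,3) unfolding T_def by simp
    then show ?thesis unfolding T_def[symmetric] using hull_subset[of T convex] by blast
  next
    case False
    then obtain i where iF: "i \<in> F" by blast
    show ?thesis
    proof (cases "\<exists>j\<in>F. j \<noteq> i")
      case True
      then obtain j where jF: "j \<in> F" and ij: "i \<noteq> j" by blast
      define t where "t = min (1 - x$i) (x$j)"
      define s where "s = min (x$i) (1 - x$j)"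
      have tp: "t > 0" and sp: "s > 0" using iF jF unfolding t_def s_def F_def by auto
      define a where "a = (\<chi> k. x$k + (if k = i then t else 0) - (if k = j then t else 0))"
      define b where "b = (\<chi> k. x$k - (if k = i then s else 0) + (if k = j then s else 0))"
      have sa: "(\<Sum>k\<in>UNIV. a$k) = (\<Sum>k\<in>UNIV. x$k)"
        unfolding a_def by (simp add: sum.distrib sum_subtractf)
      have sb: "(\<Sum>k\<in>UNIV. b$k) = (\<Sum>k\<in>UNIV. x$k)"
        unfolding b_def by (simp add: sum.distrib sum_subtractf)
      have Fa: "{k. 0 < a$k \<and> a$k < 1} \<subset> F"
      proof -
        have "{k. 0 < a$k \<and> a$k < 1} \<subseteq> F" using iF jF ij unfolding a_def F_def by auto
        moreover have "i \<notin> {k. 0 < a$k \<and> a$k < 1} \<or> j \<notin> {k. 0 < a$k \<and> a$k < 1}"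
          using ij unfolding a_def t_def by auto
        ultimately show ?thesis using iF jF by blast
      qed
      have Fb: "{k. 0 < b$k \<and> b$k < 1} \<subset> F"
      proof -
        have "{k. 0 < b$k \<and> b$k < 1} \<subseteq> F" using iF jF ij unfolding b_def F_def by auto
        moreover have "i \<notin> {k. 0 < b$k \<and> b$k < 1} \<or> j \<notin> {k. 0 < b$k \<and> b$k < 1}"
          using ij unfolding b_def s_def by auto
        ultimately show ?thesis using iF jF by blast
      qed
      have OF: "\<forall>q\<in>Os. q \<noteq> i \<and> q \<noteq> j" using less.prems(3) iF jF unfolding F_def by auto
      have "a \<in> convex hull T" unfolding T_def
      proof (rule less.hyps)
        show "card {k. 0 < a$k \<and> a$k < 1} < card {i. 0 < x$i \<and> x$i < 1}"
          using Fa unfolding F_def by (simp add: psubset_card_mono)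
        show "\<forall>k. 0 \<le> a$k \<and> a$k \<le> 1"
        proof
          fix k
          have "0 \<le> x$k" "x$k \<le> 1" "0 \<le> x$i" "x$i \<le> 1" "0 \<le> x$j" "x$j \<le> 1" using less.prems(1) by auto
          moreover have "t \<le> 1 - x$i" "t \<le> x$j" unfolding t_def by simp_all
          ultimately show "0 \<le> a$k \<and> a$k \<le> 1" using tp ij unfolding a_def by auto
        qed
        show "(\<Sum>k\<in>UNIV. a$k) \<le> real p" using sa less.prems(2) by simp
        show "\<forall>k\<in>Os. a$k = 1" using OF less.prems(3) unfolding a_def by auto
      qed
      moreover have "b \<in> convex hull T" unfolding T_def
      proof (rule less.hyps)
        show "card {k. 0 < b$k \<and> b$k < 1} < card {i. 0 < x$i \<and> x$i < 1}"
          using Fb unfolding F_def by (simp add: psubset_card_mono)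
        show "\<forall>k. 0 \<le> b$k \<and> b$k \<le> 1"
        proof
          fix k
          have "0 \<le> x$k" "x$k \<le> 1" "0 \<le> x$i" "x$i \<le> 1" "0 \<le> x$j" "x$j \<le> 1" using less.prems(1) by auto
          moreover have "s \<le> x$i" "s \<le> 1 - x$j" unfolding s_def by simp_all
          ultimately show "0 \<le> b$k \<and> b$k \<le> 1" using sp ij unfolding b_def by auto
        qed
        show "(\<Sum>k\<in>UNIV. b$k) \<le> real p" using sb less.prems(2) by simp
        show "\<forall>k\<in>Os. b$k = 1" using OF less.prems(3) unfolding b_def by auto
      qed
      moreover have "x = (s/(s+t)) *\<^sub>R a + (t/(s+t)) *\<^sub>R b"
        unfolding vec_eq_iff
      proof
        fix k
        have st: "s + t > 0" using tp sp by simp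
        have e: "(s/(s+t)) * (w1 + w2* t) + (t/(s+t)) * (w1 - w2* s) = w1" for w1 w2 :: real
        proof -
          have "(s/(s+t)) * (w1 + w2* t) + (t/(s+t)) * (w1 - w2* s) = (s*(w1+w2* t) + t*(w1-w2* s))/(s+t)"
            by (simp add: add_divide_distrib)
          also have "s*(w1+w2* t) + t*(w1-w2* s) = (s+t)*w1" by (simp add: algebra_simps)
          finally show "(s/(s+t)) * (w1 + w2* t) + (t/(s+t)) * (w1 - w2* s) = w1" using st by simp
        qed
        have ak: "a$k = x$k + (if k = i then 1 else if k = j then -1 else 0)* t" unfolding a_def using ij by auto
        have bk: "b$k = x$k - (if k = i then 1 else if k = j then -1 else 0)* s" unfolding b_def using ij by auto
        show "x$k = ((s/(s+t)) *\<^sub>R a + (t/(s+t)) *\<^sub>R b)$k"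
          proof -
          have E: "((s/(s+t)) *\<^sub>R a + (t/(s+t)) *\<^sub>R b)$k = (s/(s+t)) * a$k + (t/(s+t)) * b$k" by simp
          show ?thesis unfolding E ak bk using e[of "x$k" "(if k = i then 1 else if k = j then -1 else 0)"] by linarith
        qed
      qed
      moreover have "s/(s+t) + t/(s+t) = 1"
      proof -
        have "s + t > 0" using tp sp by simp
        then show ?thesis by (simp add: add_divide_distrib[symmetric])
      qed
      moreover have "0 \<le> s/(s+t)" "0 \<le> t/(s+t)" using tp sp by auto
      ultimately show ?thesis unfolding T_def[symmetric]
        using convexD[OF cvx] by metis
    next
      case False
      then have Fi: "F = {i}" using iF by blast
      define a where "a = (\<chi> k. if k = i then 1 else x$k)"
      define b where "b = (\<chi> k. if k = i then 0 else x$k)"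
      have oth: "\<forall>k. k \<noteq> i \<longrightarrow> x$k \<in> {0,1}"
      proof (intro allI impI)
        fix k assume "k \<noteq> i"
        then have "\<not> (0 < x$k \<and> x$k < 1)" using Fi unfolding F_def by blast
        then show "x$k \<in> {0,1}" using less.prems(1)[rule_format, of k] by (cases "x$k = 0") auto
      qed
      define N where "N = (\<Sum>k\<in>UNIV-{i}. x$k)"
      have NI: "N \<in> \<int>" unfolding N_def using oth by (intro Ints_sum) auto
      have sx: "(\<Sum>k\<in>UNIV. x$k) = x$i + N"
        unfolding N_def by (rule sum.remove) auto
      have sa: "(\<Sum>k\<in>UNIV. a$k) = 1 + N"
      proof -
        have "(\<Sum>k\<in>UNIV. a$k) = a$i + (\<Sum>k\<in>UNIV-{i}. a$k)" by (rule sum.remove) auto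
        moreover have "(\<Sum>k\<in>UNIV-{i}. a$k) = N" unfolding N_def a_def by (rule sum.cong) auto
        moreover have "a$i = 1" unfolding a_def by simp
        ultimately show ?thesis by simp
      qed
      have sb: "(\<Sum>k\<in>UNIV. b$k) = N"
      proof -
        have "(\<Sum>k\<in>UNIV. b$k) = b$i + (\<Sum>k\<in>UNIV-{i}. b$k)" by (rule sum.remove) auto
        moreover have "(\<Sum>k\<in>UNIV-{i}. b$k) = N" unfolding N_def b_def by (rule sum.cong) auto
        moreover have "b$i = 0" unfolding b_def by simp
        ultimately show ?thesis by simp
      qed
      have "N < real p" using sx less.prems(2) iF unfolding F_def by auto
      moreover obtain m where m: "N = of_int m" using NI by (elim Ints_cases) auto
      ultimately have "m < int p" by simp
      then have "m + 1 \<le> int p" by simp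
      then have N1: "N + 1 \<le> real p" using m by (metis of_int_1 of_int_add of_int_le_iff of_int_of_nat_eq)
      have xi: "0 < x$i" "x$i < 1" using iF unfolding F_def by auto
      have OF: "\<forall>q\<in>Os. q \<noteq> i" using less.prems(3) iF unfolding F_def by auto
      have "a \<in> T" unfolding T_def a_def using oth N1 sa OF less.prems(3) unfolding a_def by auto
      moreover have "b \<in> T" unfolding T_def b_def using oth N1 sb OF less.prems(3) unfolding b_def by auto
      moreover have "x = (x$i) *\<^sub>R a + (1 - x$i) *\<^sub>R b"
        unfolding vec_eq_iff a_def b_def by (auto simp: algebra_simps)
      moreover have "0 \<le> x$i" "0 \<le> 1 - x$i" "x$i + (1 - x$i) = 1" using xi by auto
      ultimately show ?thesis unfolding T_def[symmetric]
        using convexD[OF cvx] hull_subset[of T convex] by (metis subsetD)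
    qed
  qed
qed


lemma proj_linear: "linear (\<lambda>(z::real, x::real^'n, y::real^'n). (z, x))"
  by (intro linearI) (auto simp: case_prod_beta)

lemma pair_hull:
  fixes z :: real and C :: "(real \<times> (real^'n)) set"
  assumes "\<And>u. u \<in> T \<Longrightarrow> (z, u) \<in> C" and "x \<in> convex hull T"
  shows "(z, x) \<in> convex hull C"
proof -
  have "convex hull T \<subseteq> {u. (z, u) \<in> convex hull C}"
  proof (rule hull_minimal)
    show "T \<subseteq> {u. (z, u) \<in> convex hull C}" using assms(1) hull_subset[of C convex] by blast
    show "convex {u. (z, u) \<in> convex hull C}"
    proof (rule convexI)
      fix u v and a b :: real
      assume u: "u \<in> {u. (z, u) \<in> convex hull C}" and v: "v \<in> {u. (z, u) \<in> convex hull C}"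
        and ab: "0 \<le> a" "0 \<le> b" "a + b = 1"
      have zz: "a * z + b * z = z" using ab(3) by (metis distrib_right mult_1)
      have "(z, a *\<^sub>R u + b *\<^sub>R v) = a *\<^sub>R (z, u) + b *\<^sub>R (z, v)" using zz by simp
      moreover have "a *\<^sub>R (z, u) + b *\<^sub>R (z, v) \<in> convex hull C"
        using convexD[OF convex_convex_hull, of "(z,u)" C "(z,v)" a b] u v ab by simp
      ultimately show "a *\<^sub>R u + b *\<^sub>R v \<in> {u. (z, u) \<in> convex hull C}" by simp
    qed
  qed
  then show ?thesis using assms(2) by blast
qed

theorem mainTheorem7:
  fixes h :: "'n::{finite,linorder} \<Rightarrow> real" and p :: nat
  assumes "1 \<le> p" and "p \<le> CARD('n)"
    and "\<And>i j. i \<le> j \<Longrightarrow> h j \<le> h i"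
    and "\<And>i. 0 \<le> h i"
  shows "convex hull (mixF h p) = (\<lambda>(z, x, y). (z, x)) ` (convex hull (mixS h p))"
proof
  have lin: "linear (\<lambda>(z::real, x::(real,'n) vec, y::(real,'n) vec). (z, x))" by (rule proj_linear)
  show "convex hull (mixF h p) \<subseteq> (\<lambda>(z, x, y). (z, x)) ` (convex hull (mixS h p))"
  proof (rule hull_minimal)
    show "convex ((\<lambda>(z, x, y). (z, x)) ` (convex hull (mixS h p)))"
      by (rule convex_linear_image[OF lin]) simp
    show "mixF h p \<subseteq> (\<lambda>(z, x, y). (z, x)) ` (convex hull (mixS h p))"
    proof
      fix w assume wF: "w \<in> mixF h p"
      obtain z x where w: "w = (z, x)" by fastforce
      have z0: "z \<ge> 0" and x01: "\<forall>i. x$i \<in> {0,1}" and xh: "\<forall>i. x$i = 0 \<longrightarrow> z \<ge> h i"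
        and xs: "(\<Sum>i\<in>UNIV. x$i) \<le> real p"
        using wF unfolding w mixF_def by auto
      have x01': "\<forall>i. 0 \<le> x$i \<and> x$i \<le> 1"
      proof
        fix i show "0 \<le> x$i \<and> x$i \<le> 1" using x01[rule_format, of i] by auto
      qed
      have XI: "(z, x) \<in> Xi p" unfolding Xi_def using z0 x01' xs by simp
      have "\<exists>y. (z, x, y) \<in> mixS h p"
      proof (cases "\<forall>i. x$i = 1")
        case True
        have "(z, x, 0) \<in> mixS h p" unfolding mixS_def Delta_def using XI True by simp
        then show ?thesis by blast
      next
        case False
        define k where "k = Min {i. x$i \<noteq> 1}"
        obtain i0 where "x$i0 \<noteq> 1" using False by blast
        then have ne: "{i. x$i \<noteq> 1} \<noteq> {}" by blast
        have "k \<in> {i. x$i \<noteq> 1}" unfolding k_def using ne by (intro Min_in) auto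
        then have xk: "x$k \<noteq> 1" by simp
        then have xk0: "x$k = 0" using x01 by auto
        have xlt: "x$i = 1" if "i < k" for i
        proof (rule ccontr)
          assume "x$i \<noteq> 1"
          then have "k \<le> i" unfolding k_def by (intro Min_le) auto
          then show False using that by simp
        qed
        define y :: "(real,'n) vec" where "y = axis k 1"
        have sy: "(\<Sum>j\<in>UNIV. y$j) = 1" unfolding y_def axis_def by simp
        have yD: "y \<in> Delta" unfolding Delta_def using sy by (auto simp: y_def axis_def)
        have c3: "\<forall>i. z * y $ i - h i * y $ i \<ge> 0"
          using xh xk0 by (auto simp: y_def axis_def)
        have c4: "\<forall>i. - (x $ i * y $ i) \<ge> 0" using xk0 by (auto simp: y_def axis_def)
        have c5: "\<forall>i j. i < j \<longrightarrow> - ((1 - x $ i) * y $ j) \<ge> 0"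
          using xlt by (auto simp: y_def axis_def)
        have "(z, x, y) \<in> mixS h p" unfolding mixS_def using XI yD sy c3 c4 c5 by simp
        then show ?thesis by blast
      qed
      then obtain y where "(z, x, y) \<in> mixS h p" by blast
      then have "(z, x, y) \<in> convex hull (mixS h p)" using hull_subset[of "mixS h p" convex] by blast
      then show "w \<in> (\<lambda>(z, x, y). (z, x)) ` (convex hull (mixS h p))"
        unfolding w by (rule image_eqI[rotated]) simp
    qed
  qed
  show "(\<lambda>(z, x, y). (z, x)) ` (convex hull (mixS h p)) \<subseteq> convex hull (mixF h p)"
    unfolding convex_hull_linear_image[OF lin]
  proof (rule hull_minimal)
    show "convex (convex hull (mixF h p))" by simp
    show "(\<lambda>(z, x, y). (z, x)) ` mixS h p \<subseteq> convex hull mixF h p"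
    proof
      fix w assume "w \<in> (\<lambda>(z, x, y). (z, x)) ` mixS h p"
      then obtain z x y where w: "w = (z, x)" and S: "(z, x, y) \<in> mixS h p" by force
      have XI: "(z, x) \<in> Xi p" and yD: "y \<in> Delta"
        and c1: "\<forall>i. (1 - x $ i) * (1 - (\<Sum>j\<in>UNIV. y $ j)) \<ge> 0"
        and c2: "\<forall>i. - ((1 - x $ i) * (1 - (\<Sum>j\<in>UNIV. y $ j))) \<ge> 0"
        and c3: "\<forall>i. z * y $ i - h i * y $ i \<ge> 0"
        and c4: "\<forall>i. - (x $ i * y $ i) \<ge> 0"
        and c5: "\<forall>i j. i < j \<longrightarrow> - ((1 - x $ i) * y $ j) \<ge> 0"
        using S unfolding mixS_def by auto
      have z0: "z \<ge> 0" and x01: "\<forall>i. 0 \<le> x$i \<and> x$i \<le> 1" and xs: "(\<Sum>i\<in>UNIV. x$i) \<le> real p"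
        using XI unfolding Xi_def by auto
      have y0: "\<forall>i. y$i \<ge> 0" using yD unfolding Delta_def by auto
      show "w \<in> convex hull mixF h p"
      proof (cases "\<forall>i. y$i = 0")
        case True
        then have "(\<Sum>j\<in>UNIV. y $ j) = 0" by simp
        then have "\<forall>i. x$i = 1" using c1 c2 by (metis add.inverse_neutral diff_zero mult_1_right neg_le_0_iff_le order_antisym right_minus_eq le_minus_iff)
        then have "(z, x) \<in> mixF h p" unfolding mixF_def using z0 xs by simp
        then show ?thesis unfolding w using hull_subset[of "mixF h p" convex] by blast
      next
        case False
        then obtain k where "y$k \<noteq> 0" by blast
        then have yk: "y$k > 0" using y0 by (metis less_eq_real_def)
        have "(z - h k) * y$k \<ge> 0" using c3 by (metis left_diff_distrib)
        then have zk: "h k \<le> z" using yk by (simp add: zero_le_mult_iff)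
        have "x$k * y$k \<le> 0" using c4 by (metis neg_0_le_iff_le)
        then have xk: "x$k = 0" using yk x01 by (metis less_eq_real_def mult_pos_pos not_le)
        have xlt: "x$i = 1" if "i < k" for i
        proof -
          have "(1 - x$i) * y$k \<le> 0" using c5 that by (metis neg_0_le_iff_le)
          then have "1 - x$i \<le> 0" using yk by (simp add: mult_le_0_iff)
          then show ?thesis using x01 by (metis antisym diff_ge_0_iff_ge diff_le_0_iff_le)
        qed
        have "x \<in> convex hull {u. (\<forall>i. u$i \<in> {0,1}) \<and> (\<Sum>i\<in>UNIV. u$i) \<le> real p \<and> (\<forall>i\<in>{i. i < k}. u$i = 1)}"
          by (rule key) (use x01 xs xlt in auto)
        then have "(z, x) \<in> convex hull mixF h p"
        proof (rule pair_hull[rotated])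
          fix u assume u: "u \<in> {u. (\<forall>i. u$i \<in> {0,1}) \<and> (\<Sum>i\<in>UNIV. u$i) \<le> real p \<and> (\<forall>i\<in>{i. i < k}. u$i = 1)}"
          have "\<forall>i. u$i = 0 \<longrightarrow> z \<ge> h i"
          proof (intro allI impI)
            fix i assume "u$i = 0"
            then have "\<not> i < k" using u by force
            then have "k \<le> i" by simp
            then show "z \<ge> h i" using assms(3)[of k i] zk by simp
          qed
          then show "(z, u) \<in> mixF h p" unfolding mixF_def using u z0 by auto
        qed
        then show ?thesis unfolding w .
      qed
    qed
  qed
qed

end
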